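(* For trees $(n,s,L)$ and $(n,s',L')$, we have $(n,s,L)\sim(n,s',L')$ if and only if there exists a permutation $\sigma$ of $\{1,\dots,n\}$ such that $\sigma(L)=L'$ and $s'(\sigma(i))=\sigma(s(i))$ for all $i\in\{1,\dots,n-1\}$.
   Context: For $n\ge1$ write $\underline n=\{1,\dots,n\}$. A tree $(n,s,L)$ consists of $L\subseteq\underline n$ and a map $s:\underline{n-1}\to\underline n\setminus L$ with $s(x)>x$ for all $x$, and ($x\le y<s(x)\Rightarrow s(y)\le s(x)$). If $n\notin L$ and $\{k_1<\dots<k_m\}=s^{-1}(n)$, $k_0=0$, $n_i=k_i-k_{i-1}$, the successor trees of $(n,s,L)$ are the trees $(n_i,s_i,L_i)$, $i=1,\dots,m$, with $s_i(j)=s(j+k_{i-1})-k_{i-1}$ and $L_i=\{x-k_{i-1}\mid x\in L\}\cap\underline{n_i}$. For a permutation $\tau$ of $\underline m$, $(n,s^\tau,L^\tau)$ denotes the unique tree (with non-leaf root $n$) whose sequence of successor trees is $(n_{\tau(1)},s_{\tau(1)},L_{\tau(1)}),\dots,(n_{\tau(m)},s_{\tau(m)},L_{\tau(m)})$. The relation $\sim$ is the smallest equivalence relation on trees such that (i) $(n,s,L)\sim(n,s^\tau,L^\tau)$ for every applicable permutation $\tau$, and (ii) if $(n,s,L)$ and $(n',s',L')$ have successor tree sequences $(n_1,s_1,L_1),\dots,(n_m,s_m,L_m)$ and $(n_1,s'_1,L'_1),\dots,(n_m,s'_m,L'_m)$ with $(n_i,s_i,L_i)\sim(n_i,s'_i,L'_i)$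 for all $i$, then $(n,s,L)\sim(n',s',L')$. *)

theory Defs
  imports "HOL-Combinatorics.Permutations"
begin

text \<open>A tree (n,s,L) is represented as a triple. The map s is only meaningful on
  {1..n-1}; we normalise it to be 0 outside this domain so that trees are canonical
  HOL values.\<close>

type_synonym tree = "nat \<times> (nat \<Rightarrow> nat) \<times> nat set"

definition is_tree :: "tree \<Rightarrow> bool" where
  "is_tree t = (case t of (n, s, L) \<Rightarrow>
     1 \<le> n \<and> L \<subseteq> {1..n} \<and>
     (\<forall>x\<in>{1..<n}. s x \<in> {1..n} - L \<and> x < s x) \<and>
     (\<forall>x y. x \<in> {1..<n} \<longrightarrow> x \<le> y \<longrightarrow> y < s x \<longrightarrow> s y \<le> s x) \<and>
     (\<forall>x. x \<notin> {1..<n} \<longrightarrow> s x = 0))"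

text \<open>Successor trees (meaningful when n is not in L): with k_1<...<k_m the preimage
  of n under s and k_0 = 0, the i-th successor tree (0-based index i) is
  (n_i, s_i, L_i).\<close>

definition succ_trees :: "tree \<Rightarrow> tree list" where
  "succ_trees t = (case t of (n, s, L) \<Rightarrow>
     (let ks = sorted_list_of_set {x \<in> {1..<n}. s x = n};
          ks0 = 0 # ks
      in map (\<lambda>i. let k = ks0 ! i; ni = ks ! i - ks0 ! i
                  in (ni,
                      (\<lambda>j. if 1 \<le> j \<and> j < ni then s (j + k) - k else 0),
                      {x - k | x. x \<in> L} \<inter> {1..ni}))
             [0..<length ks]))"

definition nonleaf_root :: "tree \<Rightarrow> bool" where
  "nonleaf_root t = (case t of (n, s, L) \<Rightarrow> n \<notin> L)"

inductive tree_equiv :: "tree \<Rightarrow> tree \<Rightarrow> bool" where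
  refl: "is_tree t \<Longrightarrow> tree_equiv t t"
| sym: "tree_equiv t t' \<Longrightarrow> tree_equiv t' t"
| trans: "tree_equiv t t' \<Longrightarrow> tree_equiv t' t'' \<Longrightarrow> tree_equiv t t''"
| perm: "is_tree (n, s, L) \<Longrightarrow> is_tree (n, s', L') \<Longrightarrow> n \<notin> L \<Longrightarrow> n \<notin> L' \<Longrightarrow>
         \<tau> permutes {..<length (succ_trees (n, s, L))} \<Longrightarrow>
         succ_trees (n, s', L') =
           map (\<lambda>i. succ_trees (n, s, L) ! \<tau> i) [0..<length (succ_trees (n, s, L))] \<Longrightarrow>
         tree_equiv (n, s, L) (n, s', L')"
| cong: "is_tree (n, s, L) \<Longrightarrow> is_tree (n', s', L') \<Longrightarrow> n \<notin> L \<Longrightarrow> n' \<notin> L' \<Longrightarrow>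
         list_all2 (\<lambda>a b. fst a = fst b \<and> tree_equiv a b)
           (succ_trees (n, s, L)) (succ_trees (n', s', L')) \<Longrightarrow>
         tree_equiv (n, s, L) (n', s', L')"

end

theory Submission
  imports Defs
begin


abbreviation tN :: "tree \<Rightarrow> nat" where "tN t \<equiv> fst t"
abbreviation tS :: "tree \<Rightarrow> nat \<Rightarrow> nat" where "tS t \<equiv> fst (snd t)"
abbreviation tL :: "tree \<Rightarrow> nat set" where "tL t \<equiv> snd (snd t)"

definition Ks :: "tree list \<Rightarrow> nat \<Rightarrow> nat" where "Ks ts i = (\<Sum>j<i. tN (ts!j))"

lemma Ks_0[simp]: "Ks ts 0 = 0" by (simp add: Ks_def)
lemma Ks_Suc: "Ks ts (Suc i) = Ks ts i + tN (ts!i)" by (simp add: Ks_def)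
lemma Ks_le: "i \<le> j \<Longrightarrow> Ks ts i \<le> Ks ts j"
  unfolding Ks_def by (rule sum_mono2) auto
lemma Ks_Suc_le: "i < j \<Longrightarrow> Ks ts (Suc i) \<le> Ks ts j"
  by (rule Ks_le) simp
lemma Ks_uniq:
  assumes "Ks ts i < x" "x \<le> Ks ts (Suc i)" "Ks ts j < x" "x \<le> Ks ts (Suc j)"
  shows "i = j"
proof (rule ccontr)
  assume "i \<noteq> j"
  then consider "i < j" | "j < i" by linarith
  then show False
  proof cases
    case 1 then show ?thesis using Ks_Suc_le[OF 1, of ts] assms by linarith
  next
    case 2 then show ?thesis using Ks_Suc_le[OF 2, of ts] assms by linarith
  qed
qed
lemma Ks_ex:
  "0 < x \<Longrightarrow> x \<le> Ks ts m \<Longrightarrow> \<exists>i<m. Ks ts i < x \<and> x \<le> Ks ts (Suc i)"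
proof (induction m)
  case 0 then show ?case by simp
next
  case (Suc m)
  show ?case
  proof (cases "x \<le> Ks ts m")
    case True then show ?thesis using Suc by (metis less_SucI)
  next
    case False then show ?thesis using Suc.prems by auto
  qed
qed

lemma is_tree_alt: "is_tree t \<longleftrightarrow> 1 \<le> tN t \<and> tL t \<subseteq> {1..tN t} \<and>
   (\<forall>x\<in>{1..<tN t}. tS t x \<in> {1..tN t} - tL t \<and> x < tS t x) \<and>
   (\<forall>x y. x \<in> {1..<tN t} \<longrightarrow> x \<le> y \<longrightarrow> y < tS t x \<longrightarrow> tS t y \<le> tS t x) \<and>
   (\<forall>x. x \<notin> {1..<tN t} \<longrightarrow> tS t x = 0)"
  by (cases t) (simp add: is_tree_def)

definition decomp :: "tree \<Rightarrow> tree list \<Rightarrow> bool" where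
"decomp t ts \<longleftrightarrow> tN t = Ks ts (length ts) + 1 \<and> tL t \<subseteq> {1..Ks ts (length ts)} \<and>
   (\<forall>x. x \<notin> {1..<tN t} \<longrightarrow> tS t x = 0) \<and>
   (\<forall>i<length ts. \<forall>y\<in>{1..tN (ts!i)}.
      tS t (Ks ts i + y) = (if y = tN (ts!i) then tN t else Ks ts i + tS (ts!i) y) \<and>
      (Ks ts i + y \<in> tL t \<longleftrightarrow> y \<in> tL (ts!i)))"

lemma tree_decomp:
  assumes T: "is_tree (n, s, L)" and nL: "n \<notin> L"
  shows "decomp (n, s, L) (succ_trees (n, s, L)) \<and> (\<forall>u\<in>set (succ_trees (n, s, L)). is_tree u)"
proof -
  from T have n1: "1 \<le> n" and LS: "L \<subseteq> {1..n}"
    and sr: "\<And>x. x\<in>{1..<n} \<Longrightarrow> s x \<in> {1..n} - L \<and> x < s x"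
    and cv: "\<And>x y. x \<in> {1..<n} \<Longrightarrow> x \<le> y \<Longrightarrow> y < s x \<Longrightarrow> s y \<le> s x"
    and s0: "\<And>x. x \<notin> {1..<n} \<Longrightarrow> s x = 0"
    by (auto simp: is_tree_def)
  define C where "C = {x \<in> {1..<n}. s x = n}"
  define ks where "ks = sorted_list_of_set C"
  define m where "m = length ks"
  have finC: "finite C" by (simp add: C_def)
  have setks: "set ks = C" using finC by (simp add: ks_def)
  have sks: "sorted_wrt (<) ks" unfolding ks_def by simp
  have ksC: "\<And>i. i < m \<Longrightarrow> ks!i \<in> C" using setks m_def nth_mem by blast
  have ks_lt: "\<And>i j. i < j \<Longrightarrow> j < m \<Longrightarrow> ks!i < ks!j"
    using sks m_def sorted_wrt_nth_less by blast
  have ks_le: "\<And>i j. i \<le> j \<Longrightarrow> j < m \<Longrightarrow> ks!i \<le> ks!j"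
    using ks_lt by (metis le_less)
  define k0 where "k0 = (\<lambda>i. (0#ks)!i)"
  have k0_0: "k0 0 = 0" by (simp add: k0_def)
  have k0_Suc: "\<And>i. k0 (Suc i) = ks!i" by (simp add: k0_def)
  have k0_lt: "\<And>i. i<m \<Longrightarrow> k0 i < ks!i"
  proof -
    fix i assume i: "i < m"
    show "k0 i < ks!i"
    proof (cases i)
      case 0 then show ?thesis using ksC[OF i] by (simp add: k0_0 C_def)
    next
      case (Suc j) then show ?thesis using ks_lt[of j i] i by (simp add: k0_Suc)
    qed
  qed
  define ts where "ts = succ_trees (n,s,L)"
  have ts_eq: "ts = map (\<lambda>i. (ks!i - k0 i, (\<lambda>j. if 1 \<le> j \<and> j < ks!i - k0 i then s (j + k0 i) - k0 i else 0),
        {x - k0 i |x. x \<in> L} \<inter> {1..ks!i - k0 i})) [0..<m]"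
    unfolding ts_def succ_trees_def ks_def C_def k0_def m_def Let_def by simp
  have lts: "length ts = m" by (simp add: ts_eq)
  have tsi: "\<And>i. i<m \<Longrightarrow> ts!i = (ks!i - k0 i, (\<lambda>j. if 1 \<le> j \<and> j < ks!i - k0 i then s (j + k0 i) - k0 i else 0),
        {x - k0 i |x. x \<in> L} \<inter> {1..ks!i - k0 i})"
  proof -
    fix i assume "i < m"
    then have "[0..<m] ! i = i" by simp
    then show "ts!i = (ks!i - k0 i, (\<lambda>j. if 1 \<le> j \<and> j < ks!i - k0 i then s (j + k0 i) - k0 i else 0),
        {x - k0 i |x. x \<in> L} \<inter> {1..ks!i - k0 i})" unfolding ts_eq using \<open>i < m\<close> by (simp only: nth_map length_upt diff_zero \<open>[0..<m] ! i = i\<close>)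
  qed
  have Ks_eq: "\<And>i. i \<le> m \<Longrightarrow> Ks ts i = k0 i"
  proof -
    fix i show "i \<le> m \<Longrightarrow> Ks ts i = k0 i"
    proof (induction i)
      case 0 then show ?case by (simp add: k0_0)
    next
      case (Suc i)
      then have "Ks ts (Suc i) = k0 i + (ks!i - k0 i)" by (simp add: Ks_Suc tsi)
      also have "\<dots> = k0 (Suc i)" using k0_lt[of i] Suc.prems by (simp add: k0_Suc)
      finally show ?case .
    qed
  qed
  have closure: "\<And>i x. i < m \<Longrightarrow> k0 i < x \<Longrightarrow> x < ks!i \<Longrightarrow> s x \<le> ks!i \<and> x < s x \<and> s x \<notin> L \<and> 1 \<le> x \<and> x < n"
  proof -
    fix i x assume i: "i < m" and x1: "k0 i < x" and x2: "x < ks!i"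
    have kin: "ks!i \<in> C" using ksC[OF i] .
    then have xr: "x \<in> {1..<n}" using x1 x2 by (auto simp: C_def)
    have A: "x < s x" "s x \<notin> L" "s x \<le> n" using sr[OF xr] by auto
    have "s x \<le> ks!i"
    proof (rule ccontr)
      assume "\<not> s x \<le> ks!i"
      then have "s (ks!i) \<le> s x" using cv[OF xr, of "ks!i"] x2 by simp
      then have "s x = n" using kin A by (simp add: C_def)
      then have "x \<in> C" using xr by (simp add: C_def)
      then obtain j where j: "j < m" "x = ks!j" using setks m_def by (metis in_set_conv_nth)
      show False
      proof (cases "j < i")
        case True
        then obtain i' where i': "i = Suc i'" by (cases i) auto
        then have "ks!j \<le> ks!i'" using True i by (intro ks_le) auto
        then show False using x1 j i' by (simp add: k0_Suc)
      next
        case False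
        then have "ks!i \<le> ks!j" using j i by (intro ks_le) auto
        then show False using x2 j by simp
      qed
    qed
    then show "s x \<le> ks!i \<and> x < s x \<and> s x \<notin> L \<and> 1 \<le> x \<and> x < n" using A xr by auto
  qed
  have lastk: "k0 m = n - 1"
  proof (cases "m = 0")
    case True
    then have "C = {}" using setks m_def by auto
    have "n = 1"
    proof (rule ccontr)
      assume "n \<noteq> 1"
      then have "n - 1 \<in> {1..<n}" using n1 by auto
      then have "s (n-1) \<in> {1..n}" "n - 1 < s (n-1)" using sr by auto
      then have "n - 1 \<in> C" using \<open>n - 1 \<in> {1..<n}\<close> by (auto simp: C_def)
      then show False using \<open>C = {}\<close> by simp
    qed
    then show ?thesis using True k0_0 by simp
  next
    case False
    then obtain m' where m': "m = Suc m'" by (cases m) auto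
    have "ks!0 \<in> C" using ksC False by simp
    then have n2: "2 \<le> n" by (auto simp: C_def)
    then have "n - 1 \<in> {1..<n}" by auto
    then have "s (n-1) \<in> {1..n}" "n - 1 < s (n-1)" using sr by auto
    then have "n - 1 \<in> C" using \<open>n - 1 \<in> {1..<n}\<close> by (auto simp: C_def)
    then obtain j where j: "j < m" "n - 1 = ks!j" using setks m_def by (metis in_set_conv_nth)
    have "ks!j \<le> ks!m'" using j m' by (intro ks_le) auto
    moreover have "ks!m' \<in> C" using ksC m' by simp
    ultimately show ?thesis using j m' by (auto simp: C_def k0_Suc)
  qed
  have D: "decomp (n, s, L) ts"
    unfolding decomp_def
  proof (intro conjI allI impI ballI)
    show "tN (n, s, L) = Ks ts (length ts) + 1" using lastk n1 Ks_eq[of m] lts by simp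
    show "tL (n, s, L) \<subseteq> {1..Ks ts (length ts)}" 
    proof
      fix x assume "x \<in> tL (n, s, L)"
      then have "x \<in> L" by simp
      then have "1 \<le> x" "x \<le> n" "x \<noteq> n" using LS nL by auto
      then show "x \<in> {1..Ks ts (length ts)}" using lastk Ks_eq[of m] lts by simp
    qed
    show "\<And>x. x \<notin> {1..<tN (n, s, L)} \<Longrightarrow> tS (n, s, L) x = 0" using s0 by simp
  next
    fix i y assume i: "i < length ts" and y: "y \<in> {1..tN (ts ! i)}"
    have im: "i < m" using i lts by simp
    have Ki: "Ks ts i = k0 i" using Ks_eq im by simp
    have y': "1 \<le> y" "y \<le> ks!i - k0 i" using y tsi[OF im] by auto
    show "tS (n, s, L) (Ks ts i + y) = (if y = tN (ts ! i) then tN (n, s, L) else Ks ts i + tS (ts ! i) y)"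
    proof (cases "y = ks!i - k0 i")
      case True
      then have "k0 i + y = ks!i" using k0_lt[OF im] by simp
      then show ?thesis using True ksC[OF im] tsi[OF im] Ki by (simp add: C_def)
    next
      case False
      then have yl: "y < ks!i - k0 i" using y' by simp
      have c: "s (k0 i + y) \<le> ks!i" "k0 i + y < s (k0 i + y)"
        using closure[OF im, of "k0 i + y"] y' yl by auto
      show ?thesis using False yl y' tsi[OF im] Ki c by (simp add: add.commute)
    qed
    show "(Ks ts i + y \<in> tL (n, s, L)) = (y \<in> tL (ts ! i))"
    proof
      assume "Ks ts i + y \<in> tL (n, s, L)"
      then show "y \<in> tL (ts ! i)" using y' tsi[OF im] Ki by force
    next
      assume "y \<in> tL (ts ! i)"
      then obtain x where "x \<in> L" "y = x - k0 i" using tsi[OF im] by auto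
      then show "Ks ts i + y \<in> tL (n, s, L)" using y' Ki by (simp add: add.commute)
    qed
  qed
  have TR: "\<forall>u\<in>set ts. is_tree u"
  proof
    fix u assume "u \<in> set ts"
    then obtain i where im: "i < m" and u: "u = ts!i" using lts by (metis in_set_conv_nth)
    define k where "k = k0 i"
    define z where "z = ks!i - k"
    have kz: "k < ks!i" "ks!i = k + z" using k0_lt[OF im] by (auto simp: k_def z_def)
    have u': "u = (z, (\<lambda>j. if 1 \<le> j \<and> j < z then s (j + k) - k else 0), {x - k |x. x \<in> L} \<inter> {1..z})"
      unfolding k_def z_def using tsi[OF im] u by simp
    have cl: "\<And>j. 1 \<le> j \<Longrightarrow> j < z \<Longrightarrow> s (j + k) \<le> k + z \<and> j + k < s (j + k) \<and> s (j + k) \<notin> L"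
      using closure[OF im] kz by (simp add: k_def add.commute)
    show "is_tree u"
      unfolding u' is_tree_def
    proof (simp only: prod.case, intro conjI ballI allI impI)
      show "1 \<le> z" using kz by simp
      show "{x - k |x. x \<in> L} \<inter> {1..z} \<subseteq> {1..z}" by blast
    next
      fix j assume j: "j \<in> {1..<z}"
      have c: "s (j + k) \<le> k + z" "j + k < s (j + k)" "s (j + k) \<notin> L" using cl j by auto
      show "j < (if 1 \<le> j \<and> j < z then s (j + k) - k else 0)" using j c by auto
      show "(if 1 \<le> j \<and> j < z then s (j + k) - k else 0) \<in> {1..z} - ({x - k |x. x \<in> L} \<inter> {1..z})"
      proof -
        have "s (j + k) - k \<notin> {x - k |x. x \<in> L} \<inter> {1..z}"
        proof
          assume "s (j + k) - k \<in> {x - k |x. x \<in> L} \<inter> {1..z}"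
          then obtain x where "x \<in> L" "s (j + k) - k = x - k" "1 \<le> x - k" by auto
          then have "x = s (j+k)" using c by linarith
          then show False using c \<open>x \<in> L\<close> by simp
        qed
        then show ?thesis using j c by auto
      qed
    next
      fix x y assume x: "x \<in> {1..<z}" and xy: "x \<le> y"
        and ys: "y < (if 1 \<le> x \<and> x < z then s (x + k) - k else 0)"
      have c: "s (x + k) \<le> k + z" "x + k < s (x + k)" using cl x by auto
      have yz: "1 \<le> y" "y < z" using x xy ys c by auto
      have xr: "x + k \<in> {1..<n}" using closure[OF im, of "x+k"] x kz by (auto simp: k_def)
      have "s (y + k) \<le> s (x + k)" using cv[OF xr, of "y + k"] xy ys x by auto
      then show "(if 1 \<le> y \<and> y < z then s (y + k) - k else 0) \<le> (if 1 \<le> x \<and> x < z then s (x + k) - k else 0)"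
        using yz x by auto
    next
      fix x assume "x \<notin> {1..<z}"
      then show "(if 1 \<le> x \<and> x < z then s (x + k) - k else 0) = 0" by auto
    qed
  qed
  show ?thesis using D TR ts_def by simp
qed



lemma tree_facts:
  assumes "is_tree u"
  shows "1 \<le> tN u" "tL u \<subseteq> {1..tN u}"
    "\<And>x. x\<in>{1..<tN u} \<Longrightarrow> tS u x \<in> {1..tN u} - tL u \<and> x < tS u x"
    "\<And>x y. x \<in> {1..<tN u} \<Longrightarrow> x \<le> y \<Longrightarrow> y < tS u x \<Longrightarrow> tS u y \<le> tS u x"
    "\<And>x. x \<notin> {1..<tN u} \<Longrightarrow> tS u x = 0"
  using assms unfolding is_tree_alt by blast+

lemma decomp_facts:
  assumes "decomp t ts"
  shows "tN t = Ks ts (length ts) + 1" "tL t \<subseteq> {1..Ks ts (length ts)}"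
    "\<And>x. x \<notin> {1..<tN t} \<Longrightarrow> tS t x = 0"
    "\<And>i y. i < length ts \<Longrightarrow> y\<in>{1..tN (ts!i)} \<Longrightarrow>
      tS t (Ks ts i + y) = (if y = tN (ts!i) then tN t else Ks ts i + tS (ts!i) y)"
    "\<And>i y. i < length ts \<Longrightarrow> y\<in>{1..tN (ts!i)} \<Longrightarrow> (Ks ts i + y \<in> tL t \<longleftrightarrow> y \<in> tL (ts!i))"
  using assms unfolding decomp_def by blast+

lemma Ks_blk:
  assumes "0 < x" "x \<le> Ks ts m"
  obtains i y where "i < m" "y \<in> {1..tN (ts!i)}" "x = Ks ts i + y"
proof -
  obtain i where "i < m" "Ks ts i < x" "x \<le> Ks ts (Suc i)" using Ks_ex[OF assms] by blast
  then show ?thesis using that[of i "x - Ks ts i"] by (auto simp: Ks_Suc)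
qed

lemma Ks_blk_uniq:
  assumes "y \<in> {1..tN (ts!i)}" "y' \<in> {1..tN (ts!j)}" "Ks ts i + y = Ks ts j + y'"
  shows "i = j \<and> y = y'"
proof -
  have "i = j" by (rule Ks_uniq[of ts i "Ks ts i + y" j]) (use assms in \<open>auto simp: Ks_Suc\<close>)
  then show ?thesis using assms by simp
qed

lemma Ks_le_total: "i < m \<Longrightarrow> y \<le> tN (ts!i) \<Longrightarrow> Ks ts i + y \<le> Ks ts m"
  using Ks_le[of "Suc i" m ts] by (simp add: Ks_Suc)

lemma decomp_is_tree:
  assumes D: "decomp t ts" and TR: "\<forall>u\<in>set ts. is_tree u"
  shows "is_tree t"
proof -
  obtain n s L where t: "t = (n, s, L)" by (cases t)
  define m where "m = length ts"
  define K where "K = Ks ts"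
  note DF = decomp_facts[OF D, unfolded t, simplified, folded m_def K_def]
  have TRi: "\<And>i. i < m \<Longrightarrow> is_tree (ts!i)" using TR m_def by simp
  note TF = tree_facts[OF TRi]
  have blk: "\<And>x. x \<in> {1..<n} \<Longrightarrow> \<exists>i y. i < m \<and> y \<in> {1..tN (ts!i)} \<and> x = K i + y"
    using Ks_blk DF(1) K_def by (metis atLeastLessThan_iff less_Suc_eq_le add.commute plus_1_eq_Suc
        less_le_trans zero_less_one)
  have R: "\<And>x. x \<in> {1..<n} \<Longrightarrow> s x \<in> {1..n} - L \<and> x < s x"
  proof -
    fix x assume x: "x \<in> {1..<n}"
    then obtain i y where iy: "i < m" "y \<in> {1..tN (ts!i)}" "x = K i + y" using blk by blast
    show "s x \<in> {1..n} - L \<and> x < s x"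
    proof (cases "y = tN (ts!i)")
      case True
      then have "s x = n" using DF(4) iy by simp
      then show ?thesis using x DF(1,2) by auto
    next
      case False
      then have yl: "y \<in> {1..<tN (ts!i)}" using iy by auto
      have sx: "s x = K i + tS (ts!i) y" using DF(4) iy False by simp
      have c: "tS (ts!i) y \<in> {1..tN (ts!i)} - tL (ts!i)" "y < tS (ts!i) y" using TF(3)[OF iy(1) yl] by auto
      have "K i + tS (ts!i) y \<le> K m" using Ks_le_total iy(1) c K_def by auto
      moreover have "K i + tS (ts!i) y \<notin> L" using DF(5)[OF iy(1), of "tS (ts!i) y"] c by auto
      ultimately show ?thesis using sx c iy DF(1) by auto
    qed
  qed
  show ?thesis unfolding t is_tree_def
  proof (simp only: prod.case, intro conjI ballI allI impI)
    show "1 \<le> n" using DF(1) by simp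
    show "L \<subseteq> {1..n}" using DF(1,2) by auto
    show "\<And>x. x \<in> {1..<n} \<Longrightarrow> s x \<in> {1..n} - L" "\<And>x. x \<in> {1..<n} \<Longrightarrow> x < s x" using R by auto
    show "\<And>x. x \<notin> {1..<n} \<Longrightarrow> s x = 0" using DF(3) by simp
  next
    fix x z assume x: "x \<in> {1..<n}" and xz: "x \<le> z" and zs: "z < s x"
    obtain i y where iy: "i < m" "y \<in> {1..tN (ts!i)}" "x = K i + y" using blk x by blast
    show "s z \<le> s x"
    proof (cases "y = tN (ts!i)")
      case True
      then have "s x = n" using DF(4) iy by simp
      then have "z \<in> {1..<n}" using x xz zs by auto
      then show ?thesis using R \<open>s x = n\<close> by auto
    next
      case False
      then have yl: "y \<in> {1..<tN (ts!i)}" using iy by auto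
      have sx: "s x = K i + tS (ts!i) y" using DF(4) iy False by simp
      have c: "tS (ts!i) y \<in> {1..tN (ts!i)}" using TF(3)[OF iy(1) yl] by auto
      define w where "w = z - K i"
      have w: "z = K i + w" "y \<le> w" "w < tS (ts!i) y" using xz zs iy sx by (auto simp: w_def)
      have wl: "w \<in> {1..<tN (ts!i)}" using w yl c by auto
      have "s z = K i + tS (ts!i) w" using DF(4)[OF iy(1), of w] wl w by auto
      moreover have "tS (ts!i) w \<le> tS (ts!i) y" using TF(4)[OF iy(1) yl w(2,3)] .
      ultimately show ?thesis using sx by simp
    qed
  qed
qed



lemma decomp_succ:
  assumes D: "decomp (n, s, L) ts" and TR: "\<forall>u\<in>set ts. is_tree u"
  shows "succ_trees (n, s, L) = ts"
proof -
  define m where "m = length ts"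
  define K where "K = Ks ts"
  note DF = decomp_facts[OF D, simplified, folded m_def K_def]
  have TRi: "\<And>i. i < m \<Longrightarrow> is_tree (ts!i)" using TR m_def by simp
  note TF = tree_facts[OF TRi]
  define C where "C = {x \<in> {1..<n}. s x = n}"
  define xs where "xs = map (\<lambda>i. K (Suc i)) [0..<m]"
  have KS: "\<And>i. K (Suc i) = K i + tN (ts!i)" by (simp add: K_def Ks_Suc)
  have Kmono: "\<And>i j. i < j \<Longrightarrow> K (Suc i) \<le> K j" by (simp add: K_def Ks_Suc_le)
  have Kle: "\<And>i j. i \<le> j \<Longrightarrow> K i \<le> K j" by (simp add: K_def Ks_le)
  have setC: "C = set xs"
  proof
    show "C \<subseteq> set xs"
    proof
      fix x assume "x \<in> C"
      then have x: "x \<in> {1..<n}" "s x = n" by (auto simp: C_def)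
      then obtain i y where iy: "i < m" "y \<in> {1..tN (ts!i)}" "x = K i + y"
        using Ks_blk[of x ts m] DF(1) K_def by auto
      have "y = tN (ts!i)"
      proof (rule ccontr)
        assume ne: "y \<noteq> tN (ts!i)"
        then have yl: "y \<in> {1..<tN (ts!i)}" using iy by auto
        have "s x = K i + tS (ts!i) y" using DF(4) iy ne by simp
        moreover have "tS (ts!i) y \<le> tN (ts!i)" using TF(3)[OF iy(1) yl] by auto
        moreover have "K i + tN (ts!i) \<le> K m" using KS Kle[of "Suc i" m] iy(1) by simp
        ultimately show False using x DF(1) by simp
      qed
      then show "x \<in> set xs" using iy KS by (auto simp: xs_def)
    qed
  next
    show "set xs \<subseteq> C"
    proof
      fix x assume "x \<in> set xs"
      then obtain i where i: "i < m" "x = K (Suc i)" by (auto simp: xs_def)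
      have "s x = n" using DF(4)[OF i(1), of "tN (ts!i)"] TF(1)[OF i(1)] i KS by simp
      moreover have "K (Suc i) \<le> K m" using Kle i by simp
      moreover have "1 \<le> K (Suc i)" using KS TF(1)[OF i(1)] by simp
      ultimately show "x \<in> C" using i DF(1) by (auto simp: C_def)
    qed
  qed
  have sxs: "sorted_wrt (<) xs"
    unfolding sorted_wrt_iff_nth_less xs_def
  proof (intro allI impI)
    fix i j assume ij: "i < j" "j < length (map (\<lambda>i. K (Suc i)) [0..<m])"
    then have "K (Suc i) \<le> K j" "1 \<le> tN (ts!j)" using Kmono TF(1) by auto
    then show "map (\<lambda>i. K (Suc i)) [0..<m] ! i < map (\<lambda>i. K (Suc i)) [0..<m] ! j"
      using ij KS[of j] by simp
  qed
  have ks: "sorted_list_of_set C = xs"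
    by (rule strict_sorted_equal[OF sxs]) (auto simp: setC)
  have k0: "\<And>i. i < m \<Longrightarrow> (0 # xs) ! i = K i"
    by (case_tac i) (auto simp: xs_def K_def)
  have k1: "\<And>i. i < m \<Longrightarrow> xs ! i - (0 # xs) ! i = tN (ts!i)"
    using k0 KS by (simp add: xs_def)
  have "succ_trees (n, s, L) = map (\<lambda>i. let k = (0 # xs) ! i; ni = xs ! i - (0 # xs) ! i
                  in (ni, (\<lambda>j. if 1 \<le> j \<and> j < ni then s (j + k) - k else 0),
                      {x - k | x. x \<in> L} \<inter> {1..ni})) [0..<length xs]"
    using ks[unfolded C_def] unfolding succ_trees_def prod.case by (simp only: Let_def)
  also have "\<dots> = ts"
  proof (rule nth_equalityI)
    show "length (map (\<lambda>i. let k = (0 # xs) ! i; ni = xs ! i - (0 # xs) ! i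
                  in (ni, (\<lambda>j. if 1 \<le> j \<and> j < ni then s (j + k) - k else 0),
                      {x - k | x. x \<in> L} \<inter> {1..ni})) [0..<length xs]) = length ts"
      by (simp add: xs_def m_def)
  next
    fix i assume "i < length (map (\<lambda>i. let k = (0 # xs) ! i; ni = xs ! i - (0 # xs) ! i
                  in (ni, (\<lambda>j. if 1 \<le> j \<and> j < ni then s (j + k) - k else 0),
                      {x - k | x. x \<in> L} \<inter> {1..ni})) [0..<length xs])"
    then have i: "i < m" by (simp add: xs_def)
    have e: "map (\<lambda>i. let k = (0 # xs) ! i; ni = xs ! i - (0 # xs) ! i
                  in (ni, (\<lambda>j. if 1 \<le> j \<and> j < ni then s (j + k) - k else 0),
                      {x - k | x. x \<in> L} \<inter> {1..ni})) [0..<length xs] ! i =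
         (tN (ts!i), (\<lambda>j. if 1 \<le> j \<and> j < tN (ts!i) then s (j + K i) - K i else 0),
                      {x - K i | x. x \<in> L} \<inter> {1..tN (ts!i)})"
      using i unfolding Let_def k0[OF i, symmetric] k1[OF i, symmetric] by (simp add: xs_def cong: if_cong)
    obtain a b c where abc: "ts!i = (a, b, c)" by (cases "ts!i")
    have f: "(\<lambda>j. if 1 \<le> j \<and> j < a then s (j + K i) - K i else 0) = b"
    proof
      fix j show "(if 1 \<le> j \<and> j < a then s (j + K i) - K i else 0) = b j"
      proof (cases "1 \<le> j \<and> j < a")
        case True
        then show ?thesis using DF(4)[OF i, of j] abc by (simp add: add.commute)
      next
        case False
        then show ?thesis using False TF(5)[OF i, of j] abc by auto
      qed
    qed
    have g: "{x - K i | x. x \<in> L} \<inter> {1..a} = c"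
    proof
      show "{x - K i | x. x \<in> L} \<inter> {1..a} \<subseteq> c"
      proof
        fix y assume "y \<in> {x - K i | x. x \<in> L} \<inter> {1..a}"
        then obtain x where x: "x \<in> L" "y = x - K i" "y \<in> {1..a}" by auto
        then have "x = K i + y" by auto
        then show "y \<in> c" using DF(5)[OF i, of y] x abc by simp
      qed
    next
      show "c \<subseteq> {x - K i | x. x \<in> L} \<inter> {1..a}"
      proof
        fix y assume y: "y \<in> c"
        then have y1: "y \<in> {1..a}" using TF(2)[OF i] abc by auto
        then have "K i + y \<in> L" using DF(5)[OF i, of y] y abc by simp
        then show "y \<in> {x - K i | x. x \<in> L} \<inter> {1..a}" using y1 by force
      qed
    qed
    show "map (\<lambda>i. let k = (0 # xs) ! i; ni = xs ! i - (0 # xs) ! i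
                  in (ni, (\<lambda>j. if 1 \<le> j \<and> j < ni then s (j + k) - k else 0),
                      {x - k | x. x \<in> L} \<inter> {1..ni})) [0..<length xs] ! i = ts ! i"
      unfolding e using abc f g by simp
  qed
  finally show ?thesis .
qed

definition join :: "tree list \<Rightarrow> tree" where
"join ts = (Ks ts (length ts) + 1,
  (\<lambda>x. if x \<in> {1..Ks ts (length ts)} then
        (let i = LEAST i. x \<le> Ks ts (Suc i) in
          if x = Ks ts (Suc i) then Ks ts (length ts) + 1 else Ks ts i + tS (ts!i) (x - Ks ts i))
       else 0),
  (\<Union>i<length ts. (\<lambda>y. Ks ts i + y) ` tL (ts!i)))"

lemma Ks_Least:
  assumes "y \<in> {1..tN (ts!i)}"
  shows "(LEAST j. Ks ts i + y \<le> Ks ts (Suc j)) = i"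
proof (rule Least_equality)
  show "Ks ts i + y \<le> Ks ts (Suc i)" using assms by (simp add: Ks_Suc)
next
  fix j assume j: "Ks ts i + y \<le> Ks ts (Suc j)"
  show "i \<le> j"
  proof (rule ccontr)
    assume "\<not> i \<le> j"
    then have "Ks ts (Suc j) \<le> Ks ts i" using Ks_Suc_le by simp
    then show False using j assms by simp
  qed
qed

lemma join_decomp:
  assumes TR: "\<forall>u\<in>set ts. is_tree u"
  shows "decomp (join ts) ts"
  unfolding decomp_def
proof (intro conjI allI impI ballI)
  show "tN (join ts) = Ks ts (length ts) + 1" by (simp add: join_def)
  show "tL (join ts) \<subseteq> {1..Ks ts (length ts)}"
  proof
    fix x assume "x \<in> tL (join ts)"
    then obtain i y where iy: "i < length ts" "y \<in> tL (ts!i)" "x = Ks ts i + y" by (auto simp: join_def)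
    then have "y \<in> {1..tN (ts!i)}" using tree_facts(2)[of "ts!i"] TR by auto
    then show "x \<in> {1..Ks ts (length ts)}" using Ks_le_total[OF iy(1), of y] iy by auto
  qed
  show "\<And>x. x \<notin> {1..<tN (join ts)} \<Longrightarrow> tS (join ts) x = 0" by (auto simp: join_def)
next
  fix i y assume i: "i < length ts" and y: "y \<in> {1..tN (ts ! i)}"
  have r: "Ks ts i + y \<in> {1..Ks ts (length ts)}" using Ks_le_total[OF i, of y] y by auto
  show "tS (join ts) (Ks ts i + y) = (if y = tN (ts ! i) then tN (join ts) else Ks ts i + tS (ts ! i) y)"
    using r Ks_Least[OF y] y by (auto simp: join_def Let_def Ks_Suc)
  show "(Ks ts i + y \<in> tL (join ts)) = (y \<in> tL (ts ! i))"
  proof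
    assume "Ks ts i + y \<in> tL (join ts)"
    then obtain j y' where jy: "j < length ts" "y' \<in> tL (ts!j)" "Ks ts i + y = Ks ts j + y'"
      by (auto simp: join_def)
    then have "y' \<in> {1..tN (ts!j)}" using tree_facts(2)[of "ts!j"] TR by auto
    then have "i = j \<and> y = y'" using Ks_blk_uniq[OF y _ jy(3)] by blast
    then show "y \<in> tL (ts!i)" using jy by simp
  next
    assume "y \<in> tL (ts!i)"
    then show "Ks ts i + y \<in> tL (join ts)" using i by (auto simp: join_def)
  qed
qed



definition iso_by :: "(nat \<Rightarrow> nat) \<Rightarrow> tree \<Rightarrow> tree \<Rightarrow> bool" where
"iso_by \<sigma> t t' \<longleftrightarrow> tN t = tN t' \<and> \<sigma> permutes {1..tN t} \<and> \<sigma> ` tL t = tL t' \<and>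
   (\<forall>i\<in>{1..<tN t}. tS t' (\<sigma> i) = \<sigma> (tS t i))"

lemma iso_root:
  assumes T: "is_tree t" and T': "is_tree t'" and I: "iso_by \<sigma> t t'"
  shows "\<sigma> (tN t) = tN t"
proof -
  define n where "n = tN t"
  have P: "\<sigma> permutes {1..n}" and nn: "tN t' = n" and C: "\<And>i. i\<in>{1..<n} \<Longrightarrow> tS t' (\<sigma> i) = \<sigma> (tS t i)"
    using I by (auto simp: iso_by_def n_def)
  have n1: "1 \<le> n" using tree_facts(1)[OF T] n_def by simp
  define i where "i = inv \<sigma> n"
  have si: "\<sigma> i = n" using permutes_inverses(1)[OF P] i_def by simp
  have ir: "i \<in> {1..n}" using permutes_in_image[OF permutes_inv[OF P]] n1 i_def by auto
  show ?thesis
  proof (rule ccontr)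
    assume "\<sigma> (tN t) \<noteq> tN t"
    then have "i \<noteq> n" using si n_def by auto
    then have i2: "i \<in> {1..<n}" using ir by auto
    have "tS t' n = 0" using tree_facts(5)[OF T'] nn by simp
    then have "\<sigma> (tS t i) = 0" using C[OF i2] si by simp
    moreover have "tS t i \<in> {1..n}" using tree_facts(3)[OF T, of i] i2 n_def by auto
    ultimately show False using permutes_in_image[OF P, of "tS t i"] by auto
  qed
qed

lemma iso_refl: "iso_by id t t"
  by (simp add: iso_by_def)

lemma iso_sym:
  assumes T: "is_tree t" and T': "is_tree t'" and I: "iso_by \<sigma> t t'"
  shows "iso_by (inv \<sigma>) t' t"
proof -
  define n where "n = tN t"
  have P: "\<sigma> permutes {1..n}" and nn: "tN t' = n" and C: "\<And>i. i\<in>{1..<n} \<Longrightarrow> tS t' (\<sigma> i) = \<sigma> (tS t i)"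
    and LL: "\<sigma> ` tL t = tL t'"
    using I by (auto simp: iso_by_def n_def)
  have R: "\<sigma> n = n" using iso_root[OF T T' I] n_def by simp
  have "inv \<sigma> ` tL t' = tL t" using LL image_inv_f_f[OF permutes_inj[OF P]] by metis
  moreover have "\<forall>i'\<in>{1..<n}. tS t (inv \<sigma> i') = inv \<sigma> (tS t' i')"
  proof
    fix i' assume i': "i' \<in> {1..<n}"
    define i where "i = inv \<sigma> i'"
    have si: "\<sigma> i = i'" using permutes_inverses(1)[OF P] i_def by simp
    have ir: "i \<in> {1..n}" using permutes_in_image[OF permutes_inv[OF P]] i' i_def by auto
    have "i \<noteq> n" using si R i' by auto
    then have "tS t' i' = \<sigma> (tS t i)" using C[of i] ir si by auto
    then show "tS t (inv \<sigma> i') = inv \<sigma> (tS t' i')" using permutes_inverses(2)[OF P] i_def by simp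
  qed
  ultimately show ?thesis using P nn permutes_inv[OF P] by (simp add: iso_by_def n_def)
qed

lemma iso_trans:
  assumes T: "is_tree t" and T': "is_tree t'" and I1: "iso_by \<sigma>1 t t'" and I2: "iso_by \<sigma>2 t' t''"
  shows "iso_by (\<sigma>2 \<circ> \<sigma>1) t t''"
proof -
  define n where "n = tN t"
  have P1: "\<sigma>1 permutes {1..n}" and nn: "tN t' = n" and C1: "\<And>i. i\<in>{1..<n} \<Longrightarrow> tS t' (\<sigma>1 i) = \<sigma>1 (tS t i)"
    and L1: "\<sigma>1 ` tL t = tL t'"
    using I1 by (auto simp: iso_by_def n_def)
  have P2: "\<sigma>2 permutes {1..n}" and nn2: "tN t'' = n" and C2: "\<And>i. i\<in>{1..<n} \<Longrightarrow> tS t'' (\<sigma>2 i) = \<sigma>2 (tS t' i)"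
    and L2: "\<sigma>2 ` tL t' = tL t''"
    using I2 nn by (auto simp: iso_by_def n_def)
  have R: "\<sigma>1 n = n" using iso_root[OF T T' I1] n_def by simp
  have "\<forall>i\<in>{1..<n}. tS t'' ((\<sigma>2 \<circ> \<sigma>1) i) = (\<sigma>2 \<circ> \<sigma>1) (tS t i)"
  proof
    fix i assume i: "i \<in> {1..<n}"
    have "\<sigma>1 i \<in> {1..n}" using permutes_in_image[OF P1] i by auto
    moreover have "\<sigma>1 i \<noteq> n" using R i permutes_inj[OF P1] by (metis atLeastLessThan_iff injD less_irrefl)
    ultimately have "\<sigma>1 i \<in> {1..<n}" by auto
    then show "tS t'' ((\<sigma>2 \<circ> \<sigma>1) i) = (\<sigma>2 \<circ> \<sigma>1) (tS t i)" using C2 C1[OF i] by simp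
  qed
  then show ?thesis using permutes_compose[OF P1 P2] L1 L2 nn nn2
    unfolding iso_by_def n_def image_comp[symmetric] by auto
qed

lemma glue:
  assumes D: "decomp t ts" and D': "decomp t' ts'"
    and TR: "\<forall>u\<in>set ts. is_tree u" and TR': "\<forall>u\<in>set ts'. is_tree u"
    and len: "length ts' = length ts" and \<pi>: "\<pi> permutes {..<length ts}"
    and I: "\<forall>j<length ts. \<exists>\<sigma>. iso_by \<sigma> (ts!j) (ts'!(\<pi> j))"
  shows "\<exists>\<phi>. iso_by \<phi> t t'"
proof -
  obtain n s L where t: "t = (n, s, L)" by (cases t)
  obtain n' s' L' where t': "t' = (n', s', L')" by (cases t')
  define m where "m = length ts"
  define K where "K = Ks ts"
  define K' where "K' = Ks ts'"
  note DF = decomp_facts[OF D, unfolded t fst_conv snd_conv, folded m_def K_def]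
  note DF' = decomp_facts[OF D', unfolded t' fst_conv snd_conv len, folded m_def K'_def]
  have TRi: "\<And>i. i < m \<Longrightarrow> is_tree (ts!i)" using TR m_def by simp
  have TRi': "\<And>i. i < m \<Longrightarrow> is_tree (ts'!i)" using TR' m_def len by simp
  have \<pi>m: "\<And>j. j < m \<Longrightarrow> \<pi> j < m" using permutes_in_image[OF \<pi>] m_def by simp
  from I have "\<forall>j. \<exists>\<sigma>. j < m \<longrightarrow> iso_by \<sigma> (ts!j) (ts'!(\<pi> j))" using m_def by blast
  then obtain \<sigma> where \<sigma>: "\<And>j. j < m \<Longrightarrow> iso_by (\<sigma> j) (ts!j) (ts'!(\<pi> j))" by metis
  have sz: "\<And>j. j < m \<Longrightarrow> tN (ts'!(\<pi> j)) = tN (ts!j)" using \<sigma> by (simp add: iso_by_def)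
  have \<sigma>P: "\<And>j. j < m \<Longrightarrow> \<sigma> j permutes {1..tN (ts!j)}" using \<sigma> unfolding iso_by_def by blast
  have \<sigma>L: "\<And>j. j < m \<Longrightarrow> \<sigma> j ` tL (ts!j) = tL (ts'!(\<pi> j))" using \<sigma> by (simp add: iso_by_def)
  have \<sigma>C: "\<And>j y. j < m \<Longrightarrow> y \<in> {1..<tN (ts!j)} \<Longrightarrow> tS (ts'!(\<pi> j)) (\<sigma> j y) = \<sigma> j (tS (ts!j) y)"
    using \<sigma> by (simp add: iso_by_def)
  have \<sigma>R: "\<And>j. j < m \<Longrightarrow> \<sigma> j (tN (ts!j)) = tN (ts!j)"
    using iso_root[OF TRi TRi'[OF \<pi>m] \<sigma>] by simp
  have \<sigma>I: "\<And>j y. j < m \<Longrightarrow> \<sigma> j y \<in> {1..tN (ts!j)} \<longleftrightarrow> y \<in> {1..tN (ts!j)}"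
    using permutes_in_image[OF \<sigma>P] by blast
  have KK: "K' m = K m"
  proof -
    have "K' m = (\<Sum>i<m. tN (ts'!i))" by (simp add: K'_def Ks_def)
    also have "\<dots> = (\<Sum>j<m. tN (ts'!(\<pi> j)))"
      using sum.permute[OF \<pi>[folded m_def], of "\<lambda>i. tN (ts'!i)"] by (simp add: o_def)
    also have "\<dots> = (\<Sum>j<m. tN (ts!j))" using sz by simp
    finally show ?thesis by (simp add: K_def Ks_def)
  qed
  have nn: "n' = n" using DF(1) DF'(1) KK by simp
  define \<phi> where "\<phi> x = (if x \<in> {1..K m} then (let i = LEAST i. x \<le> K (Suc i) in K' (\<pi> i) + \<sigma> i (x - K i)) else x)" for x
  have F1: "\<And>j y. j < m \<Longrightarrow> y \<in> {1..tN (ts!j)} \<Longrightarrow> \<phi> (K j + y) = K' (\<pi> j) + \<sigma> j y"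
  proof -
    fix j y assume j: "j < m" and y: "y \<in> {1..tN (ts!j)}"
    have "K j + y \<in> {1..K m}" using Ks_le_total[OF j, of y ts] y K_def by auto
    then show "\<phi> (K j + y) = K' (\<pi> j) + \<sigma> j y" using Ks_Least[OF y] by (simp add: \<phi>_def K_def Let_def)
  qed
  have F2: "\<And>x. x \<notin> {1..K m} \<Longrightarrow> \<phi> x = x" unfolding \<phi>_def by auto
  have blk: "\<And>x. x \<in> {1..K m} \<Longrightarrow> \<exists>j y. j < m \<and> y \<in> {1..tN (ts!j)} \<and> x = K j + y"
    using Ks_blk K_def by (metis atLeastAtMost_iff less_le_trans zero_less_one)
  have blk': "\<And>x. x \<in> {1..K' m} \<Longrightarrow> \<exists>j y. j < m \<and> y \<in> {1..tN (ts'!j)} \<and> x = K' j + y"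
    using Ks_blk K'_def by (metis atLeastAtMost_iff less_le_trans zero_less_one)
  have F3: "\<And>j y. j < m \<Longrightarrow> y \<in> {1..tN (ts!j)} \<Longrightarrow> \<phi> (K j + y) \<in> {1..K m}"
  proof -
    fix j y assume j: "j < m" and y: "y \<in> {1..tN (ts!j)}"
    have "\<sigma> j y \<in> {1..tN (ts'!(\<pi> j))}" using \<sigma>I[OF j] y sz[OF j] by simp
    then have "K' (\<pi> j) + \<sigma> j y \<in> {1..K' m}" using Ks_le_total[OF \<pi>m[OF j], of "\<sigma> j y" ts'] K'_def by auto
    then show "\<phi> (K j + y) \<in> {1..K m}" using F1[OF j y] KK by simp
  qed
  have img: "\<phi> ` {1..n} \<subseteq> {1..n}"
  proof
    fix z assume "z \<in> \<phi> ` {1..n}"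
    then obtain x where x: "x \<in> {1..n}" "z = \<phi> x" by auto
    show "z \<in> {1..n}"
    proof (cases "x \<in> {1..K m}")
      case True
      then obtain j y where "j < m" "y \<in> {1..tN (ts!j)}" "x = K j + y" using blk by blast
      then show ?thesis using F3 x DF(1) by fastforce
    next
      case False then show ?thesis using F2 x by simp
    qed
  qed
  have inj: "inj_on \<phi> {1..n}"
  proof
    fix x1 x2 assume x1: "x1 \<in> {1..n}" and x2: "x2 \<in> {1..n}" and e: "\<phi> x1 = \<phi> x2"
    have x1': "x1 \<in> {1..K m} \<or> x1 = n" and x2': "x2 \<in> {1..K m} \<or> x2 = n" using x1 x2 DF(1) by auto
    have nK: "n \<notin> {1..K m}" using DF(1) by simp
    show "x1 = x2"
    proof (cases "x1 = n")
      case True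
      show ?thesis
      proof (rule ccontr)
        assume "x1 \<noteq> x2"
        then have "x2 \<in> {1..K m}" using x2' True by auto
        then obtain j y where "j < m" "y \<in> {1..tN (ts!j)}" "x2 = K j + y" using blk by blast
        then have "\<phi> x2 \<in> {1..K m}" using F3 by simp
        then show False using e True F2[OF nK] nK by simp
      qed
    next
      case False
      then have x1K: "x1 \<in> {1..K m}" using x1' by simp
      then obtain j1 y1 where j1: "j1 < m" "y1 \<in> {1..tN (ts!j1)}" "x1 = K j1 + y1" using blk by blast
      have "\<phi> x1 \<in> {1..K m}" using F3 j1 by simp
      then have x2K: "x2 \<in> {1..K m}" using e x2' F2[OF nK] nK by auto
      then obtain j2 y2 where j2: "j2 < m" "y2 \<in> {1..tN (ts!j2)}" "x2 = K j2 + y2" using blk by blast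
      have a1: "\<sigma> j1 y1 \<in> {1..tN (ts'!(\<pi> j1))}" using \<sigma>I[OF j1(1)] j1(2) sz[OF j1(1)] by simp
      have a2: "\<sigma> j2 y2 \<in> {1..tN (ts'!(\<pi> j2))}" using \<sigma>I[OF j2(1)] j2(2) sz[OF j2(1)] by simp
      have "K' (\<pi> j1) + \<sigma> j1 y1 = K' (\<pi> j2) + \<sigma> j2 y2" using e F1 j1 j2 by simp
      then have "\<pi> j1 = \<pi> j2 \<and> \<sigma> j1 y1 = \<sigma> j2 y2" using Ks_blk_uniq[OF a1 a2] K'_def by simp
      then have "j1 = j2" "\<sigma> j1 y1 = \<sigma> j1 y2" using permutes_inj[OF \<pi>] by (auto dest: injD)
      then have "y1 = y2" using permutes_inj[OF \<sigma>P[OF j1(1)]] by (auto dest: injD)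
      then show ?thesis using j1 j2 \<open>j1 = j2\<close> by simp
    qed
  qed
  have bij: "bij_betw \<phi> {1..n} {1..n}"
    using inj endo_inj_surj[OF _ img inj] by (simp add: bij_betw_def)
  have P: "\<phi> permutes {1..n}"
    by (rule bij_imp_permutes[OF bij]) (use F2 DF(1) in auto)
  have LL: "\<phi> ` L = L'"
  proof
    show "\<phi> ` L \<subseteq> L'"
    proof
      fix z assume "z \<in> \<phi> ` L"
      then obtain x where x: "x \<in> L" "z = \<phi> x" by auto
      have "x \<in> {1..K m}" using x DF(2) by auto
      then obtain j y where jy: "j < m" "y \<in> {1..tN (ts!j)}" "x = K j + y" using blk by blast
      have "y \<in> tL (ts!j)" using DF(5)[OF jy(1,2)] jy x by simp
      then have "\<sigma> j y \<in> tL (ts'!(\<pi> j))" using \<sigma>L[OF jy(1)] by blast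
      moreover have "\<sigma> j y \<in> {1..tN (ts'!(\<pi> j))}" using \<sigma>I[OF jy(1)] jy(2) sz[OF jy(1)] by simp
      ultimately have "K' (\<pi> j) + \<sigma> j y \<in> L'" using DF'(5)[OF \<pi>m[OF jy(1)]] by simp
      then show "z \<in> L'" using F1 jy x by simp
    qed
  next
    show "L' \<subseteq> \<phi> ` L"
    proof
      fix z assume z: "z \<in> L'"
      have "z \<in> {1..K' m}" using z DF'(2) by auto
      then obtain i y' where iy: "i < m" "y' \<in> {1..tN (ts'!i)}" "z = K' i + y'" using blk' by blast
      define j where "j = inv \<pi> i"
      have pj: "\<pi> j = i" using permutes_inverses(1)[OF \<pi>] j_def by simp
      have j: "j < m" using permutes_in_image[OF permutes_inv[OF \<pi>]] iy(1) j_def m_def by simp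
      have "y' \<in> tL (ts'!i)" using DF'(5)[OF iy(1,2)] iy z by simp
      then obtain y where y: "y \<in> tL (ts!j)" "y' = \<sigma> j y" using \<sigma>L[OF j] pj by blast
      have yr: "y \<in> {1..tN (ts!j)}" using tree_facts(2)[OF TRi[OF j]] y by auto
      have "K j + y \<in> L" using DF(5)[OF j yr] y by simp
      moreover have "\<phi> (K j + y) = z" using F1[OF j yr] y iy pj by simp
      ultimately show "z \<in> \<phi> ` L" by force
    qed
  qed
  have CC: "\<forall>x\<in>{1..<n}. s' (\<phi> x) = \<phi> (s x)"
  proof
    fix x assume x: "x \<in> {1..<n}"
    then have "x \<in> {1..K m}" using DF(1) by auto
    then obtain j y where jy: "j < m" "y \<in> {1..tN (ts!j)}" "x = K j + y" using blk by blast
    have nK: "n \<notin> {1..K m}" using DF(1) by simp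
    show "s' (\<phi> x) = \<phi> (s x)"
    proof (cases "y = tN (ts!j)")
      case True
      then have "s x = n" using DF(4)[OF jy(1,2)] jy by simp
      moreover have "\<phi> x = K' (\<pi> j) + tN (ts'!(\<pi> j))" using F1[OF jy(1,2)] jy True \<sigma>R[OF jy(1)] sz[OF jy(1)] by simp
      moreover have "s' (K' (\<pi> j) + tN (ts'!(\<pi> j))) = n'"
        using DF'(4)[OF \<pi>m[OF jy(1)], of "tN (ts'!(\<pi> j))"] tree_facts(1)[OF TRi'[OF \<pi>m[OF jy(1)]]] by simp
      ultimately show ?thesis using F2[OF nK] nn by simp
    next
      case False
      then have yl: "y \<in> {1..<tN (ts!j)}" using jy by auto
      have sx: "s x = K j + tS (ts!j) y" using DF(4)[OF jy(1,2)] jy False by simp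
      have sj: "tS (ts!j) y \<in> {1..tN (ts!j)}" using tree_facts(3)[OF TRi[OF jy(1)] yl] by auto
      have "\<sigma> j y \<noteq> tN (ts!j)" using \<sigma>R[OF jy(1)] False permutes_inj[OF \<sigma>P[OF jy(1)]] by (metis injD)
      then have a: "\<sigma> j y \<in> {1..tN (ts'!(\<pi> j))}" "\<sigma> j y \<noteq> tN (ts'!(\<pi> j))"
        using \<sigma>I[OF jy(1)] jy(2) sz[OF jy(1)] by auto
      have "s' (\<phi> x) = K' (\<pi> j) + tS (ts'!(\<pi> j)) (\<sigma> j y)"
        using F1[OF jy(1,2)] jy DF'(4)[OF \<pi>m[OF jy(1)] a(1)] a(2) by simp
      also have "\<dots> = K' (\<pi> j) + \<sigma> j (tS (ts!j) y)" using \<sigma>C[OF jy(1) yl] by simp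
      also have "\<dots> = \<phi> (s x)" using F1[OF jy(1) sj] sx by simp
      finally show ?thesis .
    qed
  qed
  show ?thesis using P LL CC nn t t' by (auto simp: iso_by_def)
qed



lemma succ_facts:
  assumes "is_tree (n, s, L)" "n \<notin> L"
  shows "decomp (n, s, L) (succ_trees (n, s, L))" "\<forall>u\<in>set (succ_trees (n, s, L)). is_tree u"
  using tree_decomp[OF assms] by auto

lemma equiv_iso:
  "tree_equiv t t' \<Longrightarrow> is_tree t \<and> is_tree t' \<and> (\<exists>\<sigma>. iso_by \<sigma> t t')"
proof (induction rule: tree_equiv.induct)
  case (refl t)
  then show ?case using iso_refl by blast
next
  case (sym t t')
  then show ?case using iso_sym by blast
next
  case (trans t t' t'')
  then show ?case using iso_trans by blast
next
  case (perm n s L s' L' \<tau>)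
  define ts where "ts = succ_trees (n, s, L)"
  define ts' where "ts' = succ_trees (n, s', L')"
  note A = succ_facts[OF perm(1,3), folded ts_def]
  note B = succ_facts[OF perm(2,4), folded ts'_def]
  have e: "ts' = map (\<lambda>i. ts ! \<tau> i) [0..<length ts]" using perm(6) ts_def ts'_def by simp
  have \<tau>: "\<tau> permutes {..<length ts}" using perm(5) ts_def by simp
  have len: "length ts' = length ts" using e by simp
  have "\<forall>j<length ts. \<exists>\<sigma>. iso_by \<sigma> (ts!j) (ts'!(inv \<tau> j))"
  proof (intro allI impI)
    fix j assume j: "j < length ts"
    have "inv \<tau> j < length ts" using permutes_in_image[OF permutes_inv[OF \<tau>]] j by simp
    then have "ts'!(inv \<tau> j) = ts!j" using e permutes_inverses(1)[OF \<tau>] by simp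
    then show "\<exists>\<sigma>. iso_by \<sigma> (ts!j) (ts'!(inv \<tau> j))" using iso_refl by metis
  qed
  then show ?case using glue[OF A(1) B(1) A(2) B(2) len permutes_inv[OF \<tau>]] perm(1,2) by blast
next
  case (cong n s L n' s' L')
  define ts where "ts = succ_trees (n, s, L)"
  define ts' where "ts' = succ_trees (n', s', L')"
  note A = succ_facts[OF cong(1,3), folded ts_def]
  note B = succ_facts[OF cong(2,4), folded ts'_def]
  have LA: "list_all2 (\<lambda>a b. fst a = fst b \<and> tree_equiv a b \<and> is_tree a \<and> is_tree b \<and> (\<exists>\<sigma>. iso_by \<sigma> a b)) ts ts'"
    using cong(5) ts_def ts'_def by simp
  have len: "length ts' = length ts" using list_all2_lengthD[OF LA] by simp
  have "\<forall>j<length ts. \<exists>\<sigma>. iso_by \<sigma> (ts!j) (ts'!(id j))"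
    using list_all2_nthD[OF LA] by simp
  then show ?case using glue[OF A(1) B(1) A(2) B(2) len permutes_id] cong(1,2) by blast
qed



datatype sh = Sh bool "sh multiset"

function shape_at :: "(nat\<Rightarrow>nat) \<Rightarrow> nat set \<Rightarrow> nat \<Rightarrow> sh" where
 "shape_at s L v = Sh (v \<in> L) (image_mset (shape_at s L) (mset_set {c. c < v \<and> s c = v}))"
  by auto
termination
  by (relation "measure (\<lambda>(s,L,v). v)") auto

declare shape_at.simps[simp del]

primrec nodes :: "sh \<Rightarrow> nat" where "nodes (Sh b M) = 1 + sum_mset (image_mset nodes M)"

abbreviation shp :: "tree \<Rightarrow> sh" where "shp t \<equiv> shape_at (tS t) (tL t) (tN t)"

lemma Ks_sum_list: "Ks ts (length ts) = sum_list (map tN ts)"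
  by (simp add: Ks_def sum_list_sum_nth atLeast0LessThan)


lemma shape_local:
  assumes D: "decomp t ts" and TR: "\<forall>u\<in>set ts. is_tree u" and i: "i < length ts"
  shows "y \<in> {1..tN (ts!i)} \<Longrightarrow> shape_at (tS t) (tL t) (Ks ts i + y) = shape_at (tS (ts!i)) (tL (ts!i)) y"
proof (induction y rule: less_induct)
  case (less y)
  obtain n s L where t: "t = (n, s, L)" by (cases t)
  define m where "m = length ts"
  define K where "K = Ks ts"
  note DF = decomp_facts[OF D, unfolded t fst_conv snd_conv, folded m_def K_def]
  have TRi: "\<And>i. i < m \<Longrightarrow> is_tree (ts!i)" using TR m_def by simp
  have im: "i < m" using i m_def by simp
  define u where "u = ts!i"
  have Tu: "is_tree u" using TRi[OF im] u_def by simp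
  have y: "y \<in> {1..tN u}" using less.prems u_def by simp
  define A where "A = {c. c < K i + y \<and> s c = K i + y}"
  define B where "B = {c. c < y \<and> tS u c = y}"
  have finB: "finite B" by (simp add: B_def)
  have Bc: "\<And>c. c \<in> B \<Longrightarrow> c \<in> {1..<tN u} \<and> c < y"
  proof -
    fix c assume c: "c \<in> B"
    then have "tS u c = y" "c < y" by (auto simp: B_def)
    then have "c \<in> {1..<tN u}" using tree_facts(5)[OF Tu, of c] y by (metis atLeastAtMost_iff not_one_le_zero)
    then show "c \<in> {1..<tN u} \<and> c < y" using \<open>c < y\<close> by simp
  qed
  have AB: "A = (\<lambda>c. K i + c) ` B"
  proof
    show "A \<subseteq> (\<lambda>c. K i + c) ` B"
    proof
      fix c assume "c \<in> A"
      then have c: "c < K i + y" "s c = K i + y" by (auto simp: A_def)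
      have "c \<in> {1..<n}" using DF(3)[of c] c y by auto
      then have "c \<in> {1..K m}" using DF(1) by auto
      then obtain j w where jw: "j < m" "w \<in> {1..tN (ts!j)}" "c = K j + w"
        using Ks_blk K_def by (metis atLeastAtMost_iff less_le_trans zero_less_one)
      have yK: "K i + y \<le> K m" using Ks_le_total[OF i, of y] y u_def K_def m_def by simp
      have ne: "w \<noteq> tN (ts!j)"
      proof
        assume "w = tN (ts!j)"
        then have "s c = n" using DF(4)[of j w] jw m_def K_def by simp
        then show False using c yK DF(1) by simp
      qed
      then have wl: "w \<in> {1..<tN (ts!j)}" using jw by auto
      have sc: "s c = K j + tS (ts!j) w" using DF(4)[of j w] jw ne m_def by simp
      have "tS (ts!j) w \<in> {1..tN (ts!j)}" using tree_facts(3)[OF TRi[OF jw(1)] wl] by auto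
      then have "j = i \<and> tS (ts!j) w = y" using Ks_blk_uniq[of "tS (ts!j) w" ts j y i] y u_def sc c K_def by auto
      then have "w \<in> B" "c = K i + w" using jw c by (auto simp: B_def u_def)
      then show "c \<in> (\<lambda>c. K i + c) ` B" by blast
    qed
  next
    show "(\<lambda>c. K i + c) ` B \<subseteq> A"
    proof
      fix z assume "z \<in> (\<lambda>c. K i + c) ` B"
      then obtain c where c: "c \<in> B" "z = K i + c" by auto
      have cc: "c \<in> {1..<tN u}" "c < y" using Bc[OF c(1)] by auto
      then have "s (K i + c) = K i + tS u c" using DF(4)[of i c] im u_def by auto
      then show "z \<in> A" using c cc by (auto simp: A_def B_def)
    qed
  qed
  have "shape_at s L (K i + y) = Sh (K i + y \<in> L) (image_mset (shape_at s L) (mset_set A))"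
    by (subst shape_at.simps) (simp add: A_def)
  also have "mset_set A = image_mset (\<lambda>c. K i + c) (mset_set B)"
    unfolding AB by (rule image_mset_mset_set[symmetric]) (simp add: inj_on_def)
  also have "image_mset (shape_at s L) (image_mset (\<lambda>c. K i + c) (mset_set B)) =
      image_mset (shape_at (tS u) (tL u)) (mset_set B)"
  proof -
    have "image_mset (shape_at s L) (image_mset (\<lambda>c. K i + c) (mset_set B)) =
        image_mset (\<lambda>c. shape_at s L (K i + c)) (mset_set B)" by (simp add: multiset.map_comp o_def)
    also have "\<dots> = image_mset (shape_at (tS u) (tL u)) (mset_set B)"
    proof (rule image_mset_cong)
      fix c assume "c \<in># mset_set B"
      then have "c \<in> B" using finB by simp
      then have "c \<in> {1..<tN u}" "c < y" using Bc by auto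
      then show "shape_at s L (K i + c) = shape_at (tS u) (tL u) c"
        using less.IH[of c] u_def t K_def by simp
    qed
    finally show ?thesis .
  qed
  also have "(K i + y \<in> L) = (y \<in> tL u)" using DF(5)[of i y] im y u_def by simp
  finally have "shape_at s L (K i + y) = Sh (y \<in> tL u) (image_mset (shape_at (tS u) (tL u)) (mset_set B))" .
  also have "\<dots> = shape_at (tS u) (tL u) y" by (simp only: shape_at.simps[of "tS u" "tL u" y] B_def)
  finally show ?case using t K_def u_def by simp
qed



lemma shape_root:
  assumes D: "decomp t ts" and TR: "\<forall>u\<in>set ts. is_tree u"
  shows "shp t = Sh False (mset (map shp ts))"
proof -
  obtain n s L where t: "t = (n, s, L)" by (cases t)
  define m where "m = length ts"
  define K where "K = Ks ts"
  note DF = decomp_facts[OF D, unfolded t fst_conv snd_conv, folded m_def K_def]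
  have TRi: "\<And>i. i < m \<Longrightarrow> is_tree (ts!i)" using TR m_def by simp
  define f where "f j = K j + tN (ts!j)" for j
  define A where "A = {c. c < n \<and> s c = n}"
  have nL: "n \<notin> L" using DF(1,2) by auto
  have Af: "A = f ` {..<m}"
  proof
    show "A \<subseteq> f ` {..<m}"
    proof
      fix c assume "c \<in> A"
      then have c: "c < n" "s c = n" by (auto simp: A_def)
      have "c \<in> {1..<n}" using DF(3)[of c] c DF(1) by auto
      then have "c \<in> {1..K m}" using DF(1) by auto
      then obtain j w where jw: "j < m" "w \<in> {1..tN (ts!j)}" "c = K j + w"
        using Ks_blk K_def by (metis atLeastAtMost_iff less_le_trans zero_less_one)
      have "w = tN (ts!j)"
      proof (rule ccontr)
        assume ne: "w \<noteq> tN (ts!j)"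
        then have wl: "w \<in> {1..<tN (ts!j)}" using jw by auto
        have sc: "s c = K j + tS (ts!j) w" using DF(4)[of j w] jw ne m_def by simp
        have "tS (ts!j) w \<le> tN (ts!j)" using tree_facts(3)[OF TRi[OF jw(1)] wl] by auto
        then have "s c \<le> K m" using sc Ks_le_total[of j m "tS (ts!j) w" ts] jw K_def by simp
        then show False using c DF(1) by simp
      qed
      then show "c \<in> f ` {..<m}" using jw by (auto simp: f_def)
    qed
  next
    show "f ` {..<m} \<subseteq> A"
    proof
      fix c assume "c \<in> f ` {..<m}"
      then obtain j where j: "j < m" "c = f j" by auto
      have "1 \<le> tN (ts!j)" using tree_facts(1)[OF TRi[OF j(1)]] .
      then have "s c = n" using DF(4)[of j "tN (ts!j)"] j m_def by (simp add: f_def)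
      moreover have "c \<le> K m" using Ks_le_total[of j m "tN (ts!j)" ts] j K_def by (simp add: f_def)
      ultimately show "c \<in> A" using DF(1) by (simp add: A_def)
    qed
  qed
  have inj: "inj_on f {..<m}"
  proof
    fix j1 j2 assume j: "j1 \<in> {..<m}" "j2 \<in> {..<m}" "f j1 = f j2"
    have "1 \<le> tN (ts!j1)" "1 \<le> tN (ts!j2)" using tree_facts(1) TRi j by auto
    then show "j1 = j2" using Ks_blk_uniq[of "tN (ts!j1)" ts j1 "tN (ts!j2)" j2] j by (simp add: f_def K_def)
  qed
  have "shape_at s L n = Sh False (image_mset (shape_at s L) (mset_set A))"
    using nL by (subst shape_at.simps) (simp add: A_def)
  also have "mset_set A = image_mset f (mset_set {..<m})"
    unfolding Af by (rule image_mset_mset_set[symmetric, OF inj])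
  also have "image_mset (shape_at s L) (image_mset f (mset_set {..<m})) =
       image_mset (\<lambda>j. shp (ts!j)) (mset_set {..<m})"
  proof -
    have "image_mset (shape_at s L) (image_mset f (mset_set {..<m})) =
       image_mset (\<lambda>j. shape_at s L (f j)) (mset_set {..<m})" by (simp add: multiset.map_comp o_def)
    also have "\<dots> = image_mset (\<lambda>j. shp (ts!j)) (mset_set {..<m})"
    proof (rule image_mset_cong)
      fix j assume "j \<in># mset_set {..<m}"
      then have j: "j < m" by simp
      have "1 \<le> tN (ts!j)" using tree_facts(1)[OF TRi[OF j]] .
      then show "shape_at s L (f j) = shp (ts!j)"
        using shape_local[OF D TR, of j "tN (ts!j)"] j t m_def K_def by (simp add: f_def)
    qed
    finally show ?thesis .
  qed
  also have "image_mset (\<lambda>j. shp (ts!j)) (mset_set {..<m}) = mset (map shp ts)"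
  proof -
    have "image_mset (\<lambda>j. shp (ts!j)) (mset_set {..<m}) = mset (map (\<lambda>j. shp (ts!j)) [0..<m])"
      by (simp add: mset_set_upto_eq_mset_upto)
    also have "map (\<lambda>j. shp (ts!j)) [0..<m] = map shp ts"
      unfolding m_def by (rule nth_equalityI) auto
    finally show ?thesis .
  qed
  finally show ?thesis using t by simp
qed

lemma leaf_root:
  assumes T: "is_tree (n, s, L)" and nL: "n \<in> L"
  shows "n = 1 \<and> L = {1} \<and> s = (\<lambda>_. 0)"
proof -
  note TF = tree_facts[OF T, unfolded fst_conv snd_conv]
  have "n = 1"
  proof (rule ccontr)
    assume "n \<noteq> 1"
    then have "n - 1 \<in> {1..<n}" using TF(1) by auto
    then have "s (n-1) \<in> {1..n} - L" "n - 1 < s (n-1)" using TF(3) by auto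
    moreover have "1 \<le> n" using TF(1) .
    ultimately have "s (n-1) = n" by auto
    then show False using nL \<open>s (n-1) \<in> {1..n} - L\<close> by auto
  qed
  moreover have "L = {1}" using TF(2) nL \<open>n = 1\<close> by auto
  moreover have "s = (\<lambda>_. 0)" using TF(5) \<open>n = 1\<close> by auto
  ultimately show ?thesis by simp
qed

lemma nodes_shape: "is_tree t \<Longrightarrow> nodes (shp t) = tN t"
proof (induction "tN t" arbitrary: t rule: less_induct)
  case less
  obtain n s L where t: "t = (n, s, L)" by (cases t)
  show ?case
  proof (cases "n \<in> L")
    case True
    then have e: "n = 1" "L = {1}" "s = (\<lambda>_. 0)" using leaf_root less.prems t by auto
    have "{c. c < (1::nat) \<and> (\<lambda>_. 0::nat) c = 1} = {}" by auto
    then have "shape_at (\<lambda>_. 0) {1} 1 = Sh True {#}" by (simp only: shape_at.simps[of "\<lambda>_. 0" "{1}" 1]) simp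
    then have "shp t = Sh True {#}" using e t by simp
    then show ?thesis using e t by simp
  next
    case False
    note A = succ_facts[OF less.prems[unfolded t] False]
    define ts where "ts = succ_trees (n, s, L)"
    have D: "decomp t ts" and TR: "\<forall>u\<in>set ts. is_tree u" using A t ts_def by auto
    have "shp t = Sh False (mset (map shp ts))" using shape_root[OF D TR] .
    then have "nodes (shp t) = 1 + sum_list (map (\<lambda>u. nodes (shp u)) ts)"
      by (simp add: sum_mset_sum_list[symmetric] multiset.map_comp o_def)
    also have "map (\<lambda>u. nodes (shp u)) ts = map tN ts"
    proof (rule map_cong[OF HOL.refl])
      fix u assume u: "u \<in> set ts"
      then obtain j where j: "j < length ts" "u = ts!j" by (metis in_set_conv_nth)
      have "tN u \<le> Ks ts (length ts)" using Ks_le_total[OF j(1), of "tN (ts!j)" ts] j by simp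
      then have "tN u < tN t" using decomp_facts(1)[OF D] by simp
      then show "nodes (shp u) = tN u" using less.hyps TR u by blast
    qed
    also have "1 + sum_list (map tN ts) = tN t" using decomp_facts(1)[OF D] Ks_sum_list by simp
    finally show ?thesis .
  qed
qed

lemma children_eq:
  assumes T: "is_tree t" and v: "1 \<le> v"
  shows "{c. c < v \<and> tS t c = v} = {c \<in> {1..<tN t}. tS t c = v}"
proof
  show "{c. c < v \<and> tS t c = v} \<subseteq> {c \<in> {1..<tN t}. tS t c = v}"
  proof
    fix c assume "c \<in> {c. c < v \<and> tS t c = v}"
    then have c: "c < v" "tS t c = v" by auto
    have "c \<in> {1..<tN t}"
    proof (rule ccontr)
      assume "c \<notin> {1..<tN t}"
      then have "tS t c = 0" using tree_facts(5)[OF T] by blast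
      then show False using c v by simp
    qed
    then show "c \<in> {c \<in> {1..<tN t}. tS t c = v}" using c by simp
  qed
  show "{c \<in> {1..<tN t}. tS t c = v} \<subseteq> {c. c < v \<and> tS t c = v}"
    using tree_facts(3)[OF T] by auto
qed

lemma shape_inv:
  assumes T: "is_tree t" and T': "is_tree t'" and I: "iso_by \<sigma> t t'"
  shows "v \<in> {1..tN t} \<Longrightarrow> shape_at (tS t) (tL t) v = shape_at (tS t') (tL t') (\<sigma> v)"
proof (induction v rule: less_induct)
  case (less v)
  define n where "n = tN t"
  have P: "\<sigma> permutes {1..n}" and nn: "tN t' = n" and C: "\<And>i. i\<in>{1..<n} \<Longrightarrow> tS t' (\<sigma> i) = \<sigma> (tS t i)"
    and LL: "\<sigma> ` tL t = tL t'"
    using I by (auto simp: iso_by_def n_def)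
  have R: "\<sigma> n = n" using iso_root[OF T T' I] n_def by simp
  have v: "v \<in> {1..n}" using less.prems n_def by simp
  have sv: "\<sigma> v \<in> {1..n}" using permutes_in_image[OF P] v by simp
  define A where "A = {c \<in> {1..<n}. tS t c = v}"
  have A1: "{c. c < v \<and> tS t c = v} = A" using children_eq[OF T] v by (simp add: A_def n_def)
  have A2: "{c. c < \<sigma> v \<and> tS t' c = \<sigma> v} = \<sigma> ` A"
  proof -
    have "{c. c < \<sigma> v \<and> tS t' c = \<sigma> v} = {c \<in> {1..<n}. tS t' c = \<sigma> v}"
      using children_eq[OF T'] sv nn by simp
    also have "\<dots> = \<sigma> ` A"
    proof
      show "{c \<in> {1..<n}. tS t' c = \<sigma> v} \<subseteq> \<sigma> ` A"
      proof
        fix c' assume c': "c' \<in> {c \<in> {1..<n}. tS t' c = \<sigma> v}"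
        define c where "c = inv \<sigma> c'"
        have sc: "\<sigma> c = c'" using permutes_inverses(1)[OF P] c_def by simp
        have cr: "c \<in> {1..n}" using permutes_in_image[OF permutes_inv[OF P]] c' c_def by auto
        have "c \<noteq> n" using sc R c' by auto
        then have c1: "c \<in> {1..<n}" using cr by auto
        then have "\<sigma> (tS t c) = \<sigma> v" using C[OF c1] sc c' by simp
        then have "tS t c = v" using permutes_inj[OF P] by (auto dest: injD)
        then show "c' \<in> \<sigma> ` A" using c1 sc by (auto simp: A_def)
      qed
    next
      show "\<sigma> ` A \<subseteq> {c \<in> {1..<n}. tS t' c = \<sigma> v}"
      proof
        fix c' assume "c' \<in> \<sigma> ` A"
        then obtain c where c: "c \<in> {1..<n}" "tS t c = v" "c' = \<sigma> c" by (auto simp: A_def)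
        have "\<sigma> c \<in> {1..n}" using permutes_in_image[OF P] c by auto
        moreover have "\<sigma> c \<noteq> n" using R c permutes_inj[OF P] by (metis atLeastLessThan_iff injD less_irrefl)
        ultimately show "c' \<in> {c \<in> {1..<n}. tS t' c = \<sigma> v}" using C[OF c(1)] c by auto
      qed
    qed
    finally show ?thesis .
  qed
  have finA: "finite A" by (simp add: A_def)
  have "shape_at (tS t) (tL t) v = Sh (v \<in> tL t) (image_mset (shape_at (tS t) (tL t)) (mset_set A))"
    by (simp only: shape_at.simps[of "tS t" "tL t" v] A1)
  also have "image_mset (shape_at (tS t) (tL t)) (mset_set A) = image_mset (\<lambda>c. shape_at (tS t') (tL t') (\<sigma> c)) (mset_set A)"
  proof (rule image_mset_cong)
    fix c assume "c \<in># mset_set A"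
    then have "c \<in> A" using finA by simp
    then have "c < v" "c \<in> {1..tN t}" using tree_facts(3)[OF T, of c] by (auto simp: A_def n_def)
    then show "shape_at (tS t) (tL t) c = shape_at (tS t') (tL t') (\<sigma> c)" using less.IH by blast
  qed
  also have "\<dots> = image_mset (shape_at (tS t') (tL t')) (mset_set (\<sigma> ` A))"
    by (simp add: image_mset_mset_set[symmetric, OF inj_on_subset[OF permutes_inj[OF P]]] multiset.map_comp o_def)
  also have "(v \<in> tL t) = (\<sigma> v \<in> tL t')" using LL permutes_inj[OF P] by (auto dest: injD)
  finally show ?case
    by (simp only: shape_at.simps[of "tS t'" "tL t'" "\<sigma> v"] A2)
qed



lemma shape_lab: "(case shape_at s L v of Sh b M \<Rightarrow> b) = (v \<in> L)"
  by (subst shape_at.simps) simp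

lemma shape_equiv:
  "is_tree t \<Longrightarrow> is_tree t' \<Longrightarrow> tN t' = tN t \<Longrightarrow> shp t = shp t' \<Longrightarrow> tree_equiv t t'"
proof (induction "tN t" arbitrary: t t' rule: less_induct)
  case less
  obtain n s L where t: "t = (n, s, L)" by (cases t)
  obtain s' L' where t': "t' = (n, s', L')" using less.prems(3) t by (cases t') auto
  have T: "is_tree (n, s, L)" and T': "is_tree (n, s', L')" using less.prems t t' by auto
  have eqL: "(n \<in> L) = (n \<in> L')"
    using arg_cong[OF less.prems(4), of "\<lambda>x. case x of Sh b M \<Rightarrow> b"] t t' shape_lab by simp
  show ?case
  proof (cases "n \<in> L")
    case True
    then have "n \<in> L'" using eqL by simp
    have a: "L = {1}" "s = (\<lambda>_. 0)" using leaf_root[OF T True] by auto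
    have b: "L' = {1}" "s' = (\<lambda>_. 0)" using leaf_root[OF T' \<open>n \<in> L'\<close>] by auto
    have "t = t'" unfolding t t' a b by (rule HOL.refl)
    then show ?thesis using tree_equiv.refl less.prems(1) by simp
  next
    case False
    then have nL': "n \<notin> L'" using eqL by simp
    define ts where "ts = succ_trees (n, s, L)"
    define ts' where "ts' = succ_trees (n, s', L')"
    note A = succ_facts[OF T False, folded ts_def]
    note B = succ_facts[OF T' nL', folded ts'_def]
    have r1: "shp t = Sh False (mset (map shp ts))" using shape_root[OF A] unfolding t by (simp only: fst_conv snd_conv)
    have r2: "shp t' = Sh False (mset (map shp ts'))" using shape_root[OF B] unfolding t' by (simp only: fst_conv snd_conv)
    have eqm: "mset (map shp ts) = mset (map shp ts')"
      using r1 r2 less.prems(4) by (simp only: sh.inject)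
    then obtain p where p: "p permutes {..<length (map shp ts)}" "permute_list p (map shp ts) = map shp ts'"
      using mset_eq_permutation[OF eqm[symmetric]] by blast
    have p': "p permutes {..<length ts}" using p(1) by simp
    define us where "us = permute_list p ts"
    have "map shp us = permute_list p (map shp ts)" unfolding us_def by (rule permute_list_map[OF p', symmetric])
    also have "\<dots> = map shp ts'" by (rule p(2))
    finally have mus: "map shp us = map shp ts'" .
    have lus: "length us = length ts" by (simp add: us_def)
    have "length (map shp us) = length (map shp ts')" using mus by (rule arg_cong)
    then have lts': "length ts' = length ts" using lus by simp
    have setus: "set us = set ts" using set_permute_list[OF p'] us_def by simp
    have TRu: "\<forall>u\<in>set us. is_tree u" using A(2) setus by simp
    have Dj: "decomp (join us) us" using join_decomp[OF TRu] .
    have Tj: "is_tree (join us)" using decomp_is_tree[OF Dj TRu] .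
    have Ksu: "Ks us (length us) = Ks ts (length ts)"
    proof -
      have "Ks us (length us) = sum_list (map tN us)" by (rule Ks_sum_list)
      also have "\<dots> = sum_mset (mset (map tN us))" by (rule sum_mset_sum_list[symmetric])
      also have "mset (map tN us) = mset (map tN ts)" using mset_permute_list[OF p'] us_def by simp
      also have "sum_mset (mset (map tN ts)) = Ks ts (length ts)" by (simp only: sum_mset_sum_list Ks_sum_list)
      finally show ?thesis .
    qed
    obtain n'' s'' L'' where j: "join us = (n'', s'', L'')" by (cases "join us")
    have nj: "n'' = n" using decomp_facts(1)[OF Dj] decomp_facts(1)[OF A(1)] Ksu j by simp
    have Dj': "decomp (n, s'', L'') us" using Dj j nj by simp
    have Tj': "is_tree (n, s'', L'')" using Tj j nj by simp
    have nLj: "n \<notin> L''" using decomp_facts(1,2)[OF Dj'] by auto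
    have sj: "succ_trees (n, s'', L'') = us" using decomp_succ[OF Dj' TRu] .
    have E1: "tree_equiv (n, s, L) (n, s'', L'')"
    proof (rule tree_equiv.perm[OF T Tj' False nLj])
      show "p permutes {..<length (succ_trees (n, s, L))}" using p' ts_def by simp
      show "succ_trees (n, s'', L'') = map (\<lambda>i. succ_trees (n, s, L) ! p i) [0..<length (succ_trees (n, s, L))]"
        using sj us_def ts_def by (simp add: permute_list_def)
    qed
    have E2: "tree_equiv (n, s'', L'') (n, s', L')"
    proof (rule tree_equiv.cong[OF Tj' T' nLj nL'])
      show "list_all2 (\<lambda>a b. fst a = fst b \<and> tree_equiv a b) (succ_trees (n, s'', L'')) (succ_trees (n, s', L'))"
        unfolding sj ts'_def[symmetric]
      proof (rule list_all2_all_nthI)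
        show "length us = length ts'" using lus lts' by simp
      next
        fix i assume i: "i < length us"
        have Ta: "is_tree (us!i)" using TRu i by simp
        have Tb: "is_tree (ts'!i)" using B(2) i lus lts' by simp
        have "map shp us ! i = map shp ts' ! i" using mus by (rule arg_cong)
        then have sh: "shp (us!i) = shp (ts'!i)" using i lus lts' by simp
        have fe: "tN (us!i) = tN (ts'!i)" using nodes_shape[OF Ta] nodes_shape[OF Tb] sh by simp
        have "tN (us!i) \<le> Ks us (length us)" using Ks_le_total[OF i, of "tN (us!i)" us] by simp
        then have lt: "tN (us!i) < tN t" using decomp_facts(1)[OF Dj'] t by simp
        have "tree_equiv (us!i) (ts'!i)" using less.hyps[OF lt Ta Tb fe[symmetric] sh] .
        then show "fst (us!i) = fst (ts'!i) \<and> tree_equiv (us!i) (ts'!i)" using fe by simp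
      qed
    qed
    show ?thesis using tree_equiv.trans[OF E1 E2] t t' by simp
  qed
qed

theorem lemma4:
  assumes "is_tree (n, s, L)" and "is_tree (n, s', L')"
  shows "tree_equiv (n, s, L) (n, s', L') \<longleftrightarrow>
         (\<exists>\<sigma>. \<sigma> permutes {1..n} \<and> \<sigma> ` L = L' \<and>
              (\<forall>i\<in>{1..<n}. s' (\<sigma> i) = \<sigma> (s i)))"
proof
  assume "tree_equiv (n, s, L) (n, s', L')"
  then obtain \<sigma> where "iso_by \<sigma> (n, s, L) (n, s', L')" using equiv_iso by blast
  then show "\<exists>\<sigma>. \<sigma> permutes {1..n} \<and> \<sigma> ` L = L' \<and> (\<forall>i\<in>{1..<n}. s' (\<sigma> i) = \<sigma> (s i))"
    by (auto simp: iso_by_def)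
next
  assume "\<exists>\<sigma>. \<sigma> permutes {1..n} \<and> \<sigma> ` L = L' \<and> (\<forall>i\<in>{1..<n}. s' (\<sigma> i) = \<sigma> (s i))"
  then obtain \<sigma> where "\<sigma> permutes {1..n}" "\<sigma> ` L = L'" "\<forall>i\<in>{1..<n}. s' (\<sigma> i) = \<sigma> (s i)" by blast
  then have I: "iso_by \<sigma> (n, s, L) (n, s', L')" by (simp add: iso_by_def)
  have R: "\<sigma> n = n" using iso_root[OF assms I] by simp
  have n1: "n \<in> {1..n}" using tree_facts(1)[OF assms(1)] by simp
  have "shape_at s L n = shape_at s' L' n" using shape_inv[OF assms I, of n] n1 R by simp
  then show "tree_equiv (n, s, L) (n, s', L')" using shape_equiv[OF assms] by simp
qed

end
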